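(* Let $T\subset\mathbb{R}^2$ be a convex polytope and $\Delta\subset\mathbb{R}^2$ a triangle. Let $(\lambda^*,u^* )$ be an optimal solution of the problem: maximize $\lambda$ subject to $\lambda\ge 0$, $u\in\mathbb{R}^2$, $\lambda\Delta+u\subseteq T$. If there exists a $(\Delta,T)$-inbody, then $S^*=\lambda^*\Delta+u^*$ is the only $(\Delta,T)$-inbody.
   Context: A triangle is the convex hull of three affinely independent points. For a convex set $C$ and $z\in\partial C$, $N_C(z)=\{v:\langle v,y-z\rangle\le 0\ \forall y\in C\}$. For a triangle $\Delta\subseteq\mathbb{R}^2$ and a nonempty convex set $T\subseteq\mathbb{R}^2$, a $(\Delta,T)$-inbody is a set $S\subseteq\mathbb{R}^2$ such that: (i) $S=\lambda\Delta+u$ for some $\lambda>0$, $u\in\mathbb{R}^2$; (ii) all three vertices of $S$ lie in $\partial T$; (iii) if $v_1,v_2,v_3$ are the vertices of $S$, there is no line $H$ through the origin such that $N_T(v_1)\cup N_T(v_2)\cup N_T(v_3)$ is contained in one of the two closed half-planes bounded by $H$. *)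

theory Defs
  imports "HOL-Analysis.Analysis"
begin

definition is_triangle :: "(real^2) set \<Rightarrow> bool" where
  "is_triangle D \<longleftrightarrow> (\<exists>a b c. a \<noteq> b \<and> a \<noteq> c \<and> b \<noteq> c \<and>
      \<not> affine_dependent {a, b, c} \<and> D = convex hull {a, b, c})"

definition homothet :: "real \<Rightarrow> real^2 \<Rightarrow> (real^2) set \<Rightarrow> (real^2) set" where
  "homothet lam u D = (\<lambda>x. lam *\<^sub>R x + u) ` D"

definition normal_cone :: "(real^2) set \<Rightarrow> real^2 \<Rightarrow> (real^2) set" where
  "normal_cone C z = {v. \<forall>y\<in>C. v \<bullet> (y - z) \<le> 0}"

text \<open>Condition (iii): no line
  through the origin (with normal w \<noteq> 0) has the union of normal cones in one of
  its closed half-planes {x. w \<bullet> x \<le> 0} (the other half-plane is obtained from -w).\<close>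
definition inbody :: "(real^2) set \<Rightarrow> (real^2) set \<Rightarrow> (real^2) set \<Rightarrow> bool" where
  "inbody D T S \<longleftrightarrow>
     (\<exists>lam u. lam > 0 \<and> S = homothet lam u D) \<and>
     (\<forall>v. v extreme_point_of S \<longrightarrow> v \<in> frontier T) \<and>
     \<not> (\<exists>w. w \<noteq> 0 \<and>
          (\<forall>v. v extreme_point_of S \<longrightarrow> (\<forall>n\<in>normal_cone T v. w \<bullet> n \<le> 0)))"

end

theory Submission
  imports Defs
begin

lemma key:
  fixes T :: "(real^2) set" and a b c u :: "real^2"
  assumes cT: "convex T" and clT: "closed T"
    and D: "D = convex hull {a,b,c}" and ind: "\<not> affine_dependent {a,b,c}"
    and dist: "a \<noteq> b" "a \<noteq> c" "b \<noteq> c"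
    and lam: "lam > 0" and S: "S = homothet lam u D" and inb: "inbody D T S"
  shows "S \<subseteq> T \<and> (\<forall>lam' u'. lam' \<ge> 0 \<and> homothet lam' u' D \<subseteq> T \<longrightarrow>
            lam' \<le> lam \<and> (lam' = lam \<longrightarrow> u' = u))"
proof -
  define f where "f = (\<lambda>x::real^2. u + lam *\<^sub>R x)"
  define V where "V = f ` {a,b,c}"
  have Sf: "S = f ` D" unfolding S homothet_def f_def by (simp add: add.commute)
  have SV: "S = convex hull V" unfolding Sf V_def D f_def by (rule convex_hull_affinity[symmetric])
  have injf: "inj f" unfolding f_def inj_def using lam by auto
  have Vimg: "V = (+) u ` ((\<lambda>x. lam *\<^sub>R x) ` {a,b,c})" unfolding V_def f_def by auto
  have lin: "linear (\<lambda>x::real^2. lam *\<^sub>R x)" by (simp add: linear_scaleR)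
  have injs: "inj (\<lambda>x::real^2. lam *\<^sub>R x)" unfolding inj_def using lam by auto
  have affV: "aff_dim V = aff_dim {a,b,c}"
    unfolding Vimg aff_dim_translation_eq by (rule aff_dim_injective_linear_image[OF lin injs])
  have cardV: "card V = card {a,b,c}" unfolding V_def using injf by (metis card_image inj_on_subset subset_UNIV)
  have indV: "\<not> affine_dependent V"
    using ind affV cardV by (simp add: affine_independent_iff_card V_def)
  have card3: "card {a,b,c} = 3" using dist by auto
  have ext: "\<And>v. v extreme_point_of S \<longleftrightarrow> v \<in> V"
    unfolding SV using extreme_point_of_convex_hull_affine_independent[OF indV] by simp
  have VfT: "V \<subseteq> frontier T" using inb ext unfolding inbody_def by blast
  have VT: "V \<subseteq> T" using VfT clT frontier_subset_closed by blast
  have ST: "S \<subseteq> T" unfolding SV using VT cT by (simp add: hull_minimal)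
  have iii: "\<And>w. w \<noteq> 0 \<Longrightarrow> \<exists>v\<in>V. \<exists>n\<in>normal_cone T v. w \<bullet> n > 0"
    using inb ext unfolding inbody_def by (metis not_le)
  have "aff_dim S = 2" unfolding SV aff_dim_convex_hull affV
    using ind card3 affine_independent_iff_card[of "{a,b,c}"] by simp
  then have "affine hull S = UNIV" using aff_dim_eq_full[where 'n="real^2"] by simp
  then have ri: "rel_interior S = interior S" by (rule rel_interior_interior)
  have "S \<noteq> {}" unfolding SV V_def by simp
  moreover have "convex S" unfolding SV by simp
  ultimately have "interior S \<noteq> {}" using ri rel_interior_eq_empty by metis
  then obtain c0 where c0: "c0 \<in> interior T" using interior_mono[OF ST] by blast
  then obtain r where r: "r > 0" "ball c0 r \<subseteq> T" using mem_interior by blast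
  have c0T: "c0 \<in> T" using c0 interior_subset by blast
  have A: "\<And>v n. v \<in> V \<Longrightarrow> n \<in> normal_cone T v \<Longrightarrow> n \<bullet> (c0 - v) \<le> 0"
    using c0T unfolding normal_cone_def by blast
  have zero: "n = 0" if v: "v \<in> V" and n: "n \<in> normal_cone T v" and eq: "n \<bullet> (c0 - v) = 0" for v n
  proof (rule ccontr)
    assume nz: "n \<noteq> 0"
    define e where "e = r / (2 * norm n)"
    have e: "e > 0" using r nz by (simp add: e_def)
    have "dist c0 (c0 + e *\<^sub>R n) < r" using nz r e by (simp add: dist_norm e_def)
    then have "c0 + e *\<^sub>R n \<in> T" using r by auto
    then have "n \<bullet> (c0 + e *\<^sub>R n - v) \<le> 0" using n unfolding normal_cone_def by blast
    also have "n \<bullet> (c0 + e *\<^sub>R n - v) = e * (n \<bullet> n)" using eq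
      by (simp add: inner_diff_right inner_add_right algebra_simps)
    finally have "n \<bullet> n \<le> 0" using e by (simp add: mult_le_0_iff)
    then show False using nz by (metis inner_gt_zero_iff not_le)
  qed
  have main: "lam' \<le> lam \<and> (lam' = lam \<longrightarrow> u' = u)"
    if l': "lam' \<ge> 0" and S': "homothet lam' u' D \<subseteq> T" for lam' u'
  proof -
    define g where "g = (\<lambda>x::real^2. lam' *\<^sub>R x + u')"
    have gT: "g x \<in> T" if "x \<in> {a,b,c}" for x
      using S' that unfolding homothet_def g_def D by (auto intro: hull_inc)
    have B: "n \<bullet> (g x - f x) \<le> 0" if "x \<in> {a,b,c}" "n \<in> normal_cone T (f x)" for x n
      using gT[OF that(1)] that(2) unfolding normal_cone_def by blast
    define t where "t = lam' - lam"
    define d where "d = u' - u"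
    have gf: "g x - f x = t *\<^sub>R x + d" for x
      unfolding g_def f_def t_def d_def by (simp add: algebra_simps)
    have l1: "lam' \<le> lam"
    proof (rule ccontr)
      assume "\<not> lam' \<le> lam"
      then have t: "t > 0" unfolding t_def by simp
      define w where "w = t *\<^sub>R (c0 - u) + lam *\<^sub>R d"
      have comb: "n \<bullet> w = t * (n \<bullet> (c0 - f x)) + lam * (n \<bullet> (g x - f x))" for n x
      proof -
        have h1: "n \<bullet> (g x - f x) = t * (n \<bullet> x) + n \<bullet> d" by (simp add: gf inner_add_right)
        have h2: "n \<bullet> (c0 - f x) = n \<bullet> c0 - n \<bullet> u - lam * (n \<bullet> x)"
          by (simp add: f_def inner_diff_right inner_add_right)
        have h3: "n \<bullet> w = t * (n \<bullet> c0 - n \<bullet> u) + lam * (n \<bullet> d)"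
          by (simp add: w_def inner_diff_right inner_add_right)
        show ?thesis unfolding h1 h2 h3 by (simp add: algebra_simps)
      qed
      have le: "n \<bullet> w \<le> 0" if "x \<in> {a,b,c}" "n \<in> normal_cone T (f x)" for x n
      proof -
        have "n \<bullet> (c0 - f x) \<le> 0" using A that V_def by blast
        moreover have "n \<bullet> (g x - f x) \<le> 0" using B that by blast
        ultimately show ?thesis unfolding comb[of n x] using t lam
          by (simp add: add_nonpos_nonpos mult_nonneg_nonpos)
      qed
      show False
      proof (cases "w = 0")
        case False
        then obtain v n where "v \<in> V" "n \<in> normal_cone T v" "w \<bullet> n > 0" using iii by blast
        then show False using le unfolding V_def by (force simp: inner_commute)
      next
        case True
        have allz: "n = 0" if "x \<in> {a,b,c}" "n \<in> normal_cone T (f x)" for x n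
        proof -
          have h1: "n \<bullet> (c0 - f x) \<le> 0" using A that V_def by blast
          have h2: "n \<bullet> (g x - f x) \<le> 0" using B that by blast
          have "t * (n \<bullet> (c0 - f x)) + lam * (n \<bullet> (g x - f x)) = 0"
            using comb[of n x] True by simp
          then have "n \<bullet> (c0 - f x) = 0" using h1 h2 t lam
            by (smt (verit) mult_nonneg_nonpos mult_pos_neg)
          then show ?thesis using zero that V_def by blast
        qed
        define w' where "w' = (axis 1 1 :: real^2)"
        have "w' \<noteq> 0" unfolding w'_def by (simp add: axis_eq_0_iff)
        then obtain v n where "v \<in> V" "n \<in> normal_cone T v" "w' \<bullet> n > 0" using iii by blast
        then show False using allz unfolding V_def by force
      qed
    qed
    have l2: "u' = u" if eq: "lam' = lam"
    proof (rule ccontr)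
      assume "u' \<noteq> u"
      then have "d \<noteq> 0" unfolding d_def by simp
      then obtain v n where v: "v \<in> V" "n \<in> normal_cone T v" "d \<bullet> n > 0" using iii by blast
      then obtain x where x: "x \<in> {a,b,c}" "v = f x" unfolding V_def by blast
      have "n \<bullet> (g x - f x) \<le> 0" using B x v by blast
      moreover have "g x - f x = d" using gf eq unfolding t_def by simp
      ultimately show False using v by (simp add: inner_commute)
    qed
    show ?thesis using l1 l2 by blast
  qed
  show ?thesis using ST main by blast
qed

theorem proposition7p3:
  fixes T D :: "(real^2) set" and lam0 :: real and u0 :: "real^2"
  assumes "polytope T"
    and "is_triangle D"
    and "lam0 \<ge> 0" and "homothet lam0 u0 D \<subseteq> T"
    and "\<forall>lam u. lam \<ge> 0 \<and> homothet lam u D \<subseteq> T \<longrightarrow> lam \<le> lam0"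
    and "\<exists>S. inbody D T S"
  shows "inbody D T (homothet lam0 u0 D) \<and>
         (\<forall>S. inbody D T S \<longrightarrow> S = homothet lam0 u0 D)"
proof -
  have cT: "convex T" and clT: "closed T"
    using assms(1) polytope_imp_convex polytope_imp_closed by auto
  obtain a b c where abc: "a \<noteq> b" "a \<noteq> c" "b \<noteq> c" "\<not> affine_dependent {a,b,c}"
    "D = convex hull {a,b,c}" using assms(2) unfolding is_triangle_def by blast
  have uniq: "S = homothet lam0 u0 D" if inb: "inbody D T S" for S
  proof -
    obtain lam u where lu: "lam > 0" "S = homothet lam u D" using inb unfolding inbody_def by blast
    have k: "S \<subseteq> T \<and> (\<forall>lam' u'. lam' \<ge> 0 \<and> homothet lam' u' D \<subseteq> T \<longrightarrow>
            lam' \<le> lam \<and> (lam' = lam \<longrightarrow> u' = u))"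
      using key[OF cT clT abc(5) abc(4) abc(1-3) lu(1) lu(2) inb] .
    have "lam \<le> lam0" using assms(5) k lu less_imp_le by blast
    moreover have "lam0 \<le> lam" using k assms(3,4) by blast
    ultimately have "lam0 = lam" by simp
    then have "u0 = u" using k assms(3,4) by blast
    then show ?thesis using lu \<open>lam0 = lam\<close> by simp
  qed
  obtain S where "inbody D T S" using assms(6) by blast
  then show ?thesis using uniq by metis
qed

end
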